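(* Let $\tau>0$, $u_n\in\mathcal V_{[0,1]}$ with $M:=\mathcal M(u_n)>0$, let $X:=\{u\in\mathcal V_{[0,1]}:\mathcal M(u)=M\}$ and $S_{\tau,u_n}:=\operatorname{argmax}_{u\in X}\langle u,e^{-\tau\Delta}u_n\rangle_{\mathcal V}$. Let $\alpha_1<\dots<\alpha_K$ be the distinct values of $e^{-\tau\Delta}u_n$ and $a_{\alpha}:=\sum_{i:(e^{-\tau\Delta}u_n)_i=\alpha}d_i^r$. Then there is a unique $k\in\{1,\dots,K\}$ with \[\sum_{l=k+1}^K a_{\alpha_l} < M \leq \sum_{l=k}^K a_{\alpha_l},\] and $u\in S_{\tau,u_n}$ if and only if $u\in X$ and: $u_i=0$ whenever $(e^{-\tau\Delta}u_n)_i<\alpha_k$; $u_i=1$ whenever $(e^{-\tau\Delta}u_n)_i>\alpha_k$; and $M-\sum_{l=k+1}^K a_{\alpha_l}=\sum_{i:(e^{-\tau\Delta}u_n)_i=\alpha_k}d_i^ru_i$. Consequently $S_{\tau,u_n}$ has exactly one element if and only if $M=\sum_{l=k}^K a_{\alpha_l}$ or there is exactly one $i\in V$ with $(e^{-\tau\Delta}u_n)_i=\alpha_k$.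
   Context: $G=(V,E)$ is a finite, simple, connected, undirected graph with weights $\omega_{ij}=\omega_{ji}>0$ for $ij\in E$, $\omega_{ij}=0$ otherwise; $d_i=\sum_j\omega_{ij}$, $r\in[0,1]$ fixed. $\mathcal V$ = functions $V\to\mathbb R$ with $\langle u,v\rangle_{\mathcal V}=\sum_i u_iv_id_i^r$; $\mathcal V_{[0,1]}$ = functions $V\to[0,1]$. $(\Delta u)_i=d_i^{-r}\sum_j\omega_{ij}(u_i-u_j)$, $e^{-\tau\Delta}$ its matrix exponential. $\mathbf 1$ all-ones; $\mathcal M(u)=\langle u,\mathbf 1\rangle_{\mathcal V}$. *)

theory Defs
  imports "HOL-Analysis.Analysis"
begin

definition deg :: "('v::finite \<Rightarrow> 'v \<Rightarrow> real) \<Rightarrow> 'v \<Rightarrow> real" where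
  "deg w i = (\<Sum>j\<in>UNIV. w i j)"

definition ipV :: "('v::finite \<Rightarrow> 'v \<Rightarrow> real) \<Rightarrow> real \<Rightarrow> ('v \<Rightarrow> real) \<Rightarrow> ('v \<Rightarrow> real) \<Rightarrow> real" where
  "ipV w r u v = (\<Sum>i\<in>UNIV. u i * v i * deg w i powr r)"

definition massV :: "('v::finite \<Rightarrow> 'v \<Rightarrow> real) \<Rightarrow> real \<Rightarrow> ('v \<Rightarrow> real) \<Rightarrow> real" where
  "massV w r u = ipV w r u (\<lambda>_. 1)"

definition lap :: "('v::finite \<Rightarrow> 'v \<Rightarrow> real) \<Rightarrow> real \<Rightarrow> ('v \<Rightarrow> real) \<Rightarrow> ('v \<Rightarrow> real)" where
  "lap w r u = (\<lambda>i. deg w i powr (-r) * (\<Sum>j\<in>UNIV. w i j * (u i - u j)))"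

text \<open>Matrix exponential e^{-tau Delta} applied to u, as its defining power series.\<close>
definition heat :: "('v::finite \<Rightarrow> 'v \<Rightarrow> real) \<Rightarrow> real \<Rightarrow> real \<Rightarrow> ('v \<Rightarrow> real) \<Rightarrow> ('v \<Rightarrow> real)" where
  "heat w r \<tau> u = (\<lambda>i. \<Sum>k. ((-\<tau>) ^ k / fact k) * ((lap w r ^^ k) u) i)"

definition unit_fun :: "('v \<Rightarrow> real) \<Rightarrow> bool" where
  "unit_fun u \<longleftrightarrow> (\<forall>i. 0 \<le> u i \<and> u i \<le> 1)"

definition admissible :: "('v::finite \<Rightarrow> 'v \<Rightarrow> real) \<Rightarrow> real \<Rightarrow> real \<Rightarrow> ('v \<Rightarrow> real) set" where
  "admissible w r M = {u. unit_fun u \<and> massV w r u = M}"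

definition argmax_set :: "('v::finite \<Rightarrow> 'v \<Rightarrow> real) \<Rightarrow> real \<Rightarrow> real \<Rightarrow> ('v \<Rightarrow> real) \<Rightarrow> ('v \<Rightarrow> real) set" where
  "argmax_set w r \<tau> un = (let X = admissible w r (massV w r un) in
     {u \<in> X. \<forall>v\<in>X. ipV w r v (heat w r \<tau> un) \<le> ipV w r u (heat w r \<tau> un)})"

text \<open>alpha l = l-th smallest distinct value (1-based) of f; a alpha = weighted level-set size.\<close>
definition alph :: "('v::finite \<Rightarrow> real) \<Rightarrow> nat \<Rightarrow> real" where
  "alph f l = sorted_list_of_set (range f) ! (l - 1)"

definition lvl :: "('v::finite \<Rightarrow> 'v \<Rightarrow> real) \<Rightarrow> real \<Rightarrow> ('v \<Rightarrow> real) \<Rightarrow> real \<Rightarrow> real" where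
  "lvl w r f \<alpha> = (\<Sum>i\<in>{i. f i = \<alpha>}. deg w i powr r)"

end

theory Submission
  imports Defs
begin

lemma alph_props:
  fixes f :: "'v::finite \<Rightarrow> real"
  defines "K \<equiv> card (range f)"
  shows alph_in: "\<And>l. l \<in> {1..K} \<Longrightarrow> alph f l \<in> range f"
    and alph_less: "\<And>l l'. l \<in> {1..K} \<Longrightarrow> l' \<in> {1..K} \<Longrightarrow> l < l' \<Longrightarrow> alph f l < alph f l'"
    and alph_surj: "\<And>i. \<exists>l\<in>{1..K}. f i = alph f l"
proof -
  let ?L = "sorted_list_of_set (range f)"
  have len: "length ?L = K" unfolding K_def by simp
  have st: "sorted_wrt (<) ?L" by simp
  have set: "set ?L = range f" by simp
  show "alph f l \<in> range f" if "l \<in> {1..K}" for l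
  proof -
    have "l - 1 < length ?L" using that len by auto
    then have "?L ! (l - 1) \<in> set ?L" by (rule nth_mem)
    then show ?thesis using set unfolding alph_def by simp
  qed
  show "alph f l < alph f l'" if "l \<in> {1..K}" "l' \<in> {1..K}" "l < l'" for l l'
    unfolding alph_def using that len st
    by (intro sorted_wrt_nth_less[where P="(<)"]) auto
  show "\<exists>l\<in>{1..K}. f i = alph f l" for i
  proof -
    have "f i \<in> set ?L" using set by auto
    then obtain n where n: "n < length ?L" "?L ! n = f i" by (metis in_set_conv_nth)
    show ?thesis using n len by (intro bexI[of _ "Suc n"]) (auto simp: alph_def)
  qed
qed

lemma split3:
  fixes f g :: "'v::finite \<Rightarrow> real"
  shows "(\<Sum>i\<in>UNIV. g i) = (\<Sum>i\<in>{i. f i < \<alpha>}. g i) + (\<Sum>i\<in>{i. f i = \<alpha>}. g i) + (\<Sum>i\<in>{i. \<alpha> < f i}. g i)"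
proof -
  have "UNIV = ({i. f i < \<alpha>} \<union> {i. f i = \<alpha>}) \<union> {i. \<alpha> < f i}" by auto
  then have "(\<Sum>i\<in>UNIV. g i) = (\<Sum>i\<in>({i. f i < \<alpha>} \<union> {i. f i = \<alpha>}) \<union> {i. \<alpha> < f i}. g i)" by simp
  also have "\<dots> = (\<Sum>i\<in>{i. f i < \<alpha>} \<union> {i. f i = \<alpha>}. g i) + (\<Sum>i\<in>{i. \<alpha> < f i}. g i)"
    by (rule sum.union_disjoint) auto
  also have "(\<Sum>i\<in>{i. f i < \<alpha>} \<union> {i. f i = \<alpha>}. g i) = (\<Sum>i\<in>{i. f i < \<alpha>}. g i) + (\<Sum>i\<in>{i. f i = \<alpha>}. g i)"
    by (rule sum.union_disjoint) auto
  finally show ?thesis .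
qed

lemma abstract0:
  fixes f a :: "'v::finite \<Rightarrow> real" and M :: real
  assumes apos: "\<And>i. 0 < a i" and Mpos: "0 < M" and Mle: "M \<le> (\<Sum>i\<in>UNIV. a i)"
  defines "K \<equiv> card (range f)"
    and "X \<equiv> {u. (\<forall>i. 0 \<le> u i \<and> u i \<le> 1) \<and> (\<Sum>i\<in>UNIV. u i * a i) = M}"
    and "lv \<equiv> (\<lambda>\<alpha>. \<Sum>i\<in>{i. f i = \<alpha>}. a i)"
  defines "S \<equiv> {u \<in> X. \<forall>v\<in>X. (\<Sum>i\<in>UNIV. v i * f i * a i) \<le> (\<Sum>i\<in>UNIV. u i * f i * a i)}"
    and "P \<equiv> (\<lambda>k. (\<Sum>l\<in>{k+1..K}. lv (alph f l)) < M \<and> M \<le> (\<Sum>l\<in>{k..K}. lv (alph f l)))"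
  shows "\<exists>k\<in>{1..K}. P k \<and> (\<forall>k'\<in>{1..K}. P k' \<longrightarrow> k' = k) \<and>
      (\<forall>u. u \<in> S \<longleftrightarrow> (u \<in> X \<and> (\<forall>i. f i < alph f k \<longrightarrow> u i = 0) \<and> (\<forall>i. f i > alph f k \<longrightarrow> u i = 1) \<and>
          M - (\<Sum>l\<in>{k+1..K}. lv (alph f l)) = (\<Sum>i\<in>{i. f i = alph f k}. a i * u i))) \<and>
      ((\<exists>!u. u \<in> S) \<longleftrightarrow> (M = (\<Sum>l\<in>{k..K}. lv (alph f l)) \<or> (\<exists>!i. f i = alph f k)))"
proof -
  note a_in = alph_in[of _ f, folded K_def]
  note a_less = alph_less[of _ f, folded K_def]
  note a_surj = alph_surj[of f, folded K_def]
  have a_le: "alph f l \<le> alph f l'" if "l \<in> {1..K}" "l' \<in> {1..K}" "l \<le> l'" for l l'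
    using a_less[OF that(1,2)] that(3) by (cases "l = l'") auto
  have lv_nonneg: "0 \<le> lv x" for x unfolding lv_def using apos by (simp add: sum_nonneg less_imp_le)
  have lv_pos: "0 < lv (alph f l)" if lK: "l \<in> {1..K}" for l
  proof -
    obtain i where i: "f i = alph f l" using a_in[OF lK] by auto
    show ?thesis unfolding lv_def using i apos by (intro sum_pos) auto
  qed
  have inj: "inj_on (alph f) {1..K}"
  proof (rule inj_onI)
    fix x y assume "x \<in> {1..K}" "y \<in> {1..K}" "alph f x = alph f y"
    then show "x = y" using a_less by (metis less_irrefl linorder_neq_iff)
  qed
  have sumJ: "(\<Sum>l\<in>J. lv (alph f l)) = (\<Sum>i\<in>{i. \<exists>l\<in>J. f i = alph f l}. a i)" if J: "J \<subseteq> {1..K}" for J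
  proof -
    have "(\<Sum>l\<in>J. lv (alph f l)) = (\<Sum>y\<in>alph f ` J. lv y)"
      by (simp add: sum.reindex inj_on_subset[OF inj J])
    also have "\<dots> = (\<Sum>y\<in>alph f ` J. \<Sum>i\<in>{i. i \<in> {i. \<exists>l\<in>J. f i = alph f l} \<and> f i = y}. a i)"
      unfolding lv_def by (intro sum.cong refl) auto
    also have "\<dots> = (\<Sum>i\<in>{i. \<exists>l\<in>J. f i = alph f l}. a i)"
      using finite_subset[OF J] by (intro sum.group) auto
    finally show ?thesis .
  qed
  have gt: "{i. \<exists>l\<in>{k+1..K}. f i = alph f l} = {i. alph f k < f i}" if k: "k \<in> {1..K}" for k
  proof (intro set_eqI iffI; simp)
    fix i assume "\<exists>l\<in>{Suc k..K}. f i = alph f l"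
    then obtain l where "l \<in> {Suc k..K}" "f i = alph f l" by auto
    then show "alph f k < f i" using a_less[of k l] k by auto
  next
    fix i assume h: "alph f k < f i"
    obtain l where l: "l \<in> {1..K}" "f i = alph f l" using a_surj by blast
    have "\<not> l \<le> k" using a_le[OF l(1) k] h l by auto
    then show "\<exists>l\<in>{Suc k..K}. f i = alph f l" using l by auto
  qed
  define T where "T k = (\<Sum>l\<in>{k..K}. lv (alph f l))" for k
  have Tanti: "T k' \<le> T k" if "k \<le> k'" for k k'
    unfolding T_def using that lv_nonneg by (intro sum_mono2) auto
  have K1: "1 \<le> K" unfolding K_def by (simp add: Suc_le_eq card_gt_0_iff)
  have T1: "T 1 = (\<Sum>i\<in>UNIV. a i)"
  proof -
    have "{i. \<exists>l\<in>{1..K}. f i = alph f l} = UNIV" using a_surj by auto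
    then show ?thesis unfolding T_def using sumJ[of "{1..K}"] by simp
  qed
  have TSuc: "T k = lv (alph f k) + T (k+1)" if "k \<in> {1..K}" for k
  proof -
    have "{k..K} = insert k {k+1..K}" using that by auto
    then show ?thesis unfolding T_def by simp
  qed
  have TK: "T (K+1) = 0" unfolding T_def by simp
  define k where "k = Max {k\<in>{1..K}. M \<le> T k}"
  have finQ: "finite {k\<in>{1..K}. M \<le> T k}" by simp
  have Qne: "1 \<in> {k\<in>{1..K}. M \<le> T k}" using K1 T1 Mle by simp
  have kQ: "k \<in> {k\<in>{1..K}. M \<le> T k}" unfolding k_def using finQ Qne by (intro Max_in) auto
  then have kin: "k \<in> {1..K}" and MTk: "M \<le> T k" by auto
  have MTk1: "T (k+1) < M"
  proof (cases "k = K")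
    case True then show ?thesis using TK Mpos by simp
  next
    case False
    show ?thesis
    proof (rule ccontr)
      assume "\<not> T (k+1) < M"
      then have "k+1 \<in> {k\<in>{1..K}. M \<le> T k}" using False kin by auto
      then have "k+1 \<le> k" unfolding k_def using finQ by (intro Max_ge) auto
      then show False by simp
    qed
  qed
  have PT: "P j \<longleftrightarrow> T (j+1) < M \<and> M \<le> T j" for j unfolding P_def T_def by simp
  have Pk: "P k" using PT MTk MTk1 by simp
  have Puniq: "\<forall>k'\<in>{1..K}. P k' \<longrightarrow> k' = k"
  proof (intro ballI impI)
    fix k' assume k': "k' \<in> {1..K}" "P k'"
    show "k' = k"
    proof (rule ccontr)
      assume "k' \<noteq> k"
      then consider "k' < k" | "k < k'" by linarith
      then show False
      proof cases
        case 1
        then have "T k \<le> T (k'+1)" by (intro Tanti) simp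
        then show False using k' PT MTk by fastforce
      next
        case 2
        then have "T k' \<le> T (k+1)" by (intro Tanti) simp
        then show False using k' PT MTk1 by fastforce
      qed
    qed
  qed
  define \<alpha> where "\<alpha> = alph f k"
  define A where "A = T (k+1)"
  define B where "B = lv \<alpha>"
  have A_eq: "A = (\<Sum>i\<in>{i. \<alpha> < f i}. a i)"
    unfolding A_def T_def \<alpha>_def using sumJ[of "{k+1..K}"] gt[OF kin] kin by auto
  have B_eq: "B = (\<Sum>i\<in>{i. f i = \<alpha>}. a i)" unfolding B_def lv_def ..
  have Bpos: "0 < B" unfolding B_def \<alpha>_def using lv_pos[OF kin] .
  have AM: "A < M" using MTk1 A_def by simp
  have MAB: "M \<le> A + B" using MTk TSuc[OF kin] A_def B_def \<alpha>_def by simp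
  have TkAB: "T k = A + B" using TSuc[OF kin] A_def B_def \<alpha>_def by simp
  have lvlA: "(\<Sum>l\<in>{k+1..K}. lv (alph f l)) = A" unfolding A_def T_def ..
  have lvlT: "(\<Sum>l\<in>{k..K}. lv (alph f l)) = T k" unfolding T_def ..
  have \<alpha>in: "\<alpha> \<in> range f" unfolding \<alpha>_def using a_in[OF kin] .

  define C where "C u \<longleftrightarrow> u \<in> X \<and> (\<forall>i. f i < \<alpha> \<longrightarrow> u i = 0) \<and> (\<forall>i. f i > \<alpha> \<longrightarrow> u i = 1)" for u
  have levelcond: "M - A = (\<Sum>i\<in>{i. f i = \<alpha>}. a i * u i)" if "C u" for u
  proof -
    have X: "(\<Sum>i\<in>UNIV. u i * a i) = M" using that unfolding C_def X_def by auto
    have 1: "(\<Sum>i\<in>{i. f i < \<alpha>}. u i * a i) = 0" using that unfolding C_def by (intro sum.neutral) auto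
    have 2: "(\<Sum>i\<in>{i. \<alpha> < f i}. u i * a i) = A" unfolding A_eq using that unfolding C_def by (intro sum.cong) auto
    have 3: "(\<Sum>i\<in>{i. f i = \<alpha>}. u i * a i) = (\<Sum>i\<in>{i. f i = \<alpha>}. a i * u i)" by (simp add: mult.commute)
    show ?thesis using split3[of "\<lambda>i. u i * a i" f \<alpha>] X 1 2 3 by simp
  qed
  have Dexp: "(\<Sum>i\<in>UNIV. u i * f i * a i) - (\<Sum>i\<in>UNIV. v i * f i * a i) = (\<Sum>i\<in>UNIV. (u i - v i) * (f i - \<alpha>) * a i)"
    if "u \<in> X" "v \<in> X" for u v
  proof -
    have "(\<Sum>i\<in>UNIV. (u i - v i) * (f i - \<alpha>) * a i) = (\<Sum>i\<in>UNIV. u i * f i * a i) - (\<Sum>i\<in>UNIV. v i * f i * a i) - \<alpha> * ((\<Sum>i\<in>UNIV. u i * a i) - (\<Sum>i\<in>UNIV. v i * a i))"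
      by (simp add: algebra_simps sum_subtractf sum_distrib_left sum.distrib)
    then show ?thesis using that unfolding X_def by simp
  qed
  have Dterm: "0 \<le> (u i - v i) * (f i - \<alpha>) * a i" if "C u" "v \<in> X" for u v i
  proof -
    have a: "0 < a i" by (rule apos)
    consider "f i < \<alpha>" | "f i = \<alpha>" | "\<alpha> < f i" by linarith
    then show ?thesis
    proof cases
      case 1 then have "u i = 0" using that unfolding C_def by auto
      moreover have "0 \<le> v i" using that unfolding X_def by auto
      ultimately show ?thesis using 1 a by (intro mult_nonneg_nonneg mult_nonpos_nonpos) auto
    next
      case 2 then show ?thesis by simp
    next
      case 3 then have "u i = 1" using that unfolding C_def by auto
      moreover have "v i \<le> 1" using that unfolding X_def by auto
      ultimately show ?thesis using 3 a by (intro mult_nonneg_nonneg) auto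
    qed
  qed
  define t where "t = (M - A) / B"
  have t0: "0 < t" and t1: "t \<le> 1" unfolding t_def using AM MAB Bpos by auto
  define u0 where "u0 i = (if \<alpha> < f i then 1 else if f i = \<alpha> then t else 0)" for i
  have u0mass: "(\<Sum>i\<in>UNIV. u0 i * a i) = M"
  proof -
    have 1: "(\<Sum>i\<in>{i. f i < \<alpha>}. u0 i * a i) = 0" unfolding u0_def by (intro sum.neutral) auto
    have 2: "(\<Sum>i\<in>{i. \<alpha> < f i}. u0 i * a i) = A" unfolding A_eq u0_def by (intro sum.cong) auto
    have "(\<Sum>i\<in>{i. f i = \<alpha>}. u0 i * a i) = (\<Sum>i\<in>{i. f i = \<alpha>}. t * a i)" unfolding u0_def by (intro sum.cong) auto
    also have "\<dots> = t * B" unfolding B_eq by (simp add: sum_distrib_left)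
    also have "\<dots> = M - A" unfolding t_def using Bpos by simp
    finally show ?thesis using split3[of "\<lambda>i. u0 i * a i" f \<alpha>] 1 2 by simp
  qed
  have Cu0: "C u0" unfolding C_def X_def using u0mass t0 t1 by (auto simp: u0_def)
  have S_iff: "u \<in> S \<longleftrightarrow> C u" for u
  proof
    assume "C u"
    then have uX: "u \<in> X" unfolding C_def by simp
    show "u \<in> S" unfolding S_def
    proof (intro CollectI conjI uX ballI)
      fix v assume v: "v \<in> X"
      have "0 \<le> (\<Sum>i\<in>UNIV. (u i - v i) * (f i - \<alpha>) * a i)"
        using Dterm[OF \<open>C u\<close> v] by (intro sum_nonneg) auto
      then show "(\<Sum>i\<in>UNIV. v i * f i * a i) \<le> (\<Sum>i\<in>UNIV. u i * f i * a i)"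
        using Dexp[OF uX v] by simp
    qed
  next
    assume uS: "u \<in> S"
    then have uX: "u \<in> X" unfolding S_def by simp
    have u0X: "u0 \<in> X" using Cu0 unfolding C_def by simp
    have le: "(\<Sum>i\<in>UNIV. u0 i * f i * a i) \<le> (\<Sum>i\<in>UNIV. u i * f i * a i)"
      using uS u0X unfolding S_def by auto
    have nn: "\<forall>i\<in>UNIV. 0 \<le> (u0 i - u i) * (f i - \<alpha>) * a i" using Dterm[OF Cu0 uX] by auto
    have "0 \<le> (\<Sum>i\<in>UNIV. (u0 i - u i) * (f i - \<alpha>) * a i)"
      using nn by (intro sum_nonneg) auto
    then have "(\<Sum>i\<in>UNIV. (u0 i - u i) * (f i - \<alpha>) * a i) = 0"
      using Dexp[OF u0X uX] le by linarith
    then have z: "\<And>i. (u0 i - u i) * (f i - \<alpha>) * a i = 0" using nn by (simp add: sum_nonneg_eq_0_iff)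
    have "(\<forall>i. f i < \<alpha> \<longrightarrow> u i = 0) \<and> (\<forall>i. f i > \<alpha> \<longrightarrow> u i = 1)"
    proof (intro conjI allI impI)
      fix i assume "f i < \<alpha>" then show "u i = 0" using z[of i] apos[of i] by (simp add: u0_def)
    next
      fix i assume "f i > \<alpha>" then show "u i = 1" using z[of i] apos[of i] by (simp add: u0_def)
    qed
    then show "C u" using uX unfolding C_def by simp
  qed
  have uniq_iff: "(\<exists>!u. u \<in> S) \<longleftrightarrow> (M = A + B \<or> (\<exists>!i. f i = \<alpha>))"
  proof
    assume ex1: "\<exists>!u. u \<in> S"
    show "M = A + B \<or> (\<exists>!i. f i = \<alpha>)"
    proof (rule ccontr)
      assume neg: "\<not> (M = A + B \<or> (\<exists>!i. f i = \<alpha>))"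
      then have tl1: "t < 1" using MAB Bpos unfolding t_def by (auto simp: field_simps)
      obtain i1 i2 where i12: "f i1 = \<alpha>" "f i2 = \<alpha>" "i1 \<noteq> i2" using neg \<alpha>in by blast
      define s where "s = min (a i1 * (1 - t)) (a i2 * t)"
      have spos: "0 < s" unfolding s_def using apos[of i1] apos[of i2] t0 tl1 by simp
      have s1: "s / a i1 \<le> 1 - t" using apos[of i1] unfolding s_def by (simp add: divide_le_eq mult.commute)
      have s2: "s / a i2 \<le> t" using apos[of i2] unfolding s_def by (simp add: divide_le_eq mult.commute)
      define u1 where "u1 i = u0 i + ((if i = i1 then s / a i1 else 0) - (if i = i2 then s / a i2 else 0))" for i
      have pt: "u1 i * a i = u0 i * a i + ((if i = i1 then s else 0) - (if i = i2 then s else 0))" for i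
        unfolding u1_def using apos[of i1] apos[of i2] i12(3) by (auto simp: algebra_simps)
      have "(\<Sum>i\<in>UNIV. u1 i * a i) = (\<Sum>i\<in>UNIV. u0 i * a i) + ((\<Sum>i\<in>UNIV. if i = i1 then s else 0) - (\<Sum>i\<in>UNIV. if i = i2 then s else 0))"
        unfolding pt by (simp add: sum.distrib sum_subtractf)
      then have u1mass: "(\<Sum>i\<in>UNIV. u1 i * a i) = M" using u0mass by simp
      have "C u1" unfolding C_def X_def
      proof (intro conjI CollectI allI impI u1mass)
        fix i
        have q1: "0 \<le> s / a i1" "0 \<le> s / a i2" using spos apos[of i1] apos[of i2] by auto
        have q2: "t - s / a i2 \<le> 1" "0 \<le> t + s / a i1" using q1 t0 t1 by linarith+
        show "0 \<le> u1 i" "u1 i \<le> 1" using q2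
          using t0 t1 s1 s2 spos apos[of i1] apos[of i2] i12
            divide_nonneg_pos[of s "a i1"] divide_nonneg_pos[of s "a i2"]
          by (auto simp: u1_def u0_def)
      next
        fix i assume "f i < \<alpha>" then show "u1 i = 0" using i12 by (auto simp: u1_def u0_def)
      next
        fix i assume "f i > \<alpha>" then show "u1 i = 1" using i12 by (auto simp: u1_def u0_def)
      qed
      moreover have "u1 \<noteq> u0"
      proof
        assume "u1 = u0"
        then have "u1 i1 = u0 i1" by simp
        then show False using i12 spos apos[of i1] by (simp add: u1_def)
      qed
      ultimately show False using ex1 Cu0 S_iff by blast
    qed
  next
    assume h: "M = A + B \<or> (\<exists>!i. f i = \<alpha>)"
    have eq: "u = v" if "C u" "C v" for u v
    proof
      fix i
      consider "f i < \<alpha>" | "\<alpha> < f i" | "f i = \<alpha>" by linarith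
      then show "u i = v i"
      proof cases
        case 1 then show ?thesis using that unfolding C_def by auto
      next
        case 2 then show ?thesis using that unfolding C_def by auto
      next
        case 3
        from h show ?thesis
        proof
          assume MAB': "M = A + B"
          have one: "w i = 1" if "C w" for w
          proof -
            have "(\<Sum>i\<in>{i. f i = \<alpha>}. a i * (1 - w i)) = B - (\<Sum>i\<in>{i. f i = \<alpha>}. a i * w i)"
              unfolding B_eq by (simp add: algebra_simps sum_subtractf)
            also have "\<dots> = 0" using levelcond[OF that] MAB' by simp
            finally have s0: "(\<Sum>i\<in>{i. f i = \<alpha>}. a i * (1 - w i)) = 0" .
            have nn1: "\<forall>j\<in>{i. f i = \<alpha>}. 0 \<le> a j * (1 - w j)"
            proof
              fix j
              have "0 \<le> a j" "0 \<le> 1 - w j" using that apos[of j] unfolding C_def X_def by auto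
              then show "0 \<le> a j * (1 - w j)" by simp
            qed
            have "\<forall>j\<in>{i. f i = \<alpha>}. a j * (1 - w j) = 0"
              using sum_nonneg_eq_0_iff[of "{i. f i = \<alpha>}" "\<lambda>j. a j * (1 - w j)"] nn1 s0 by simp
            then have "a i * (1 - w i) = 0" using 3 by simp
            then show ?thesis using apos[of i] by simp
          qed
          show ?thesis using one[OF \<open>C u\<close>] one[OF \<open>C v\<close>] by simp
        next
          assume "\<exists>!i. f i = \<alpha>"
          then have single: "{j. f j = \<alpha>} = {i}" using 3 by auto
          have "a i * u i = a i * v i" using levelcond[OF \<open>C u\<close>] levelcond[OF \<open>C v\<close>] single by auto
          then show ?thesis using apos[of i] by simp
        qed
      qed
    qed
    show "\<exists>!u. u \<in> S" using Cu0 eq S_iff by blast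
  qed
  show ?thesis
  proof (intro bexI[OF _ kin] conjI Pk Puniq allI)
    fix u
    show "u \<in> S \<longleftrightarrow> (u \<in> X \<and> (\<forall>i. f i < alph f k \<longrightarrow> u i = 0) \<and> (\<forall>i. f i > alph f k \<longrightarrow> u i = 1) \<and>
          M - (\<Sum>l\<in>{k+1..K}. lv (alph f l)) = (\<Sum>i\<in>{i. f i = alph f k}. a i * u i))"
      using S_iff[of u] levelcond[of u] unfolding lvlA C_def \<alpha>_def[symmetric] by blast
  next
    show "(\<exists>!u. u \<in> S) \<longleftrightarrow> (M = (\<Sum>l\<in>{k..K}. lv (alph f l)) \<or> (\<exists>!i. f i = alph f k))"
      using uniq_iff unfolding lvlT TkAB \<alpha>_def[symmetric] .
  qed
qed

theorem theorem26:
  fixes w :: "'v::finite \<Rightarrow> 'v \<Rightarrow> real" and r \<tau> :: real and un :: "'v \<Rightarrow> real"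
  assumes sym: "\<And>i j. w i j = w j i"
    and nonneg: "\<And>i j. 0 \<le> w i j"
    and loopless: "\<And>i. w i i = 0"
    and connected: "\<And>i j. (\<lambda>x y. 0 < w x y)\<^sup>*\<^sup>* i j"
    and r: "0 \<le> r" "r \<le> 1"
    and tau: "0 < \<tau>"
    and un: "unit_fun un"
    and M: "0 < massV w r un"
  shows "let M = massV w r un; f = heat w r \<tau> un; K = card (range f);
             S = argmax_set w r \<tau> un;
             P = (\<lambda>k. (\<Sum>l\<in>{k+1..K}. lvl w r f (alph f l)) < M \<and>
                      M \<le> (\<Sum>l\<in>{k..K}. lvl w r f (alph f l)))
         in \<exists>k\<in>{1..K}. P k \<and> (\<forall>k'\<in>{1..K}. P k' \<longrightarrow> k' = k) \<and>
              (\<forall>u. u \<in> S \<longleftrightarrow>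
                  (u \<in> admissible w r M \<and>
                   (\<forall>i. f i < alph f k \<longrightarrow> u i = 0) \<and>
                   (\<forall>i. f i > alph f k \<longrightarrow> u i = 1) \<and>
                   M - (\<Sum>l\<in>{k+1..K}. lvl w r f (alph f l))
                     = (\<Sum>i\<in>{i. f i = alph f k}. deg w i powr r * u i))) \<and>
              ((\<exists>!u. u \<in> S) \<longleftrightarrow>
                  (M = (\<Sum>l\<in>{k..K}. lvl w r f (alph f l)) \<or> (\<exists>!i. f i = alph f k)))"
proof -
  have massV_eq: "massV w r u = (\<Sum>i\<in>UNIV. u i * deg w i powr r)" for u
    unfolding massV_def ipV_def by simp
  have dpos: "0 < deg w i" for i
  proof (rule ccontr)
    assume "\<not> 0 < deg w i"
    then have "deg w i = 0" using nonneg unfolding deg_def by (meson not_less sum_nonneg antisym)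
    then have z: "\<And>j. w i j = 0" using nonneg unfolding deg_def
      by (simp add: sum_nonneg_eq_0_iff)
    have only: "j = i" for j
      using connected[of i j]
    proof (rule converse_rtranclpE)
      fix y assume "0 < w i y" then show "j = i" using z by simp
    qed simp
    then have U: "UNIV = {i}" by auto
    have "massV w r un = (\<Sum>j\<in>{i}. un j * deg w j powr r)" unfolding massV_eq U ..
    then have "massV w r un = un i * deg w i powr r" by simp
    also have "\<dots> = 0" using \<open>deg w i = 0\<close> by simp
    finally show False using M by simp
  qed
  have Mle: "massV w r un \<le> (\<Sum>i\<in>UNIV. deg w i powr r)"
    unfolding massV_eq using un unfolding unit_fun_def
    by (intro sum_mono) (auto intro: mult_left_le_one_le)
  note H = abstract0[of "\<lambda>i. deg w i powr r" "massV w r un" "heat w r \<tau> un", OF _ M Mle]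
  have H': "\<And>i. 0 < deg w i powr r"
  proof -
    fix i show "0 < deg w i powr r" using dpos[of i] by simp
  qed
  show ?thesis
    using H[OF H'] unfolding Let_def argmax_set_def admissible_def unit_fun_def lvl_def ipV_def massV_eq
    by simp
qed

end
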